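(* Let $E$ be a pseudo effect algebra satisfying (RDP), let $s_1,s_2\in\mathcal S(E)$, and let $F_1,F_2$ be the faces of $\mathcal S(E)$ generated by $s_1$ and $s_2$ respectively. The following are equivalent: (i) $F_1\cap F_2=\emptyset$; (ii) $s_1\wedge s_2=0$ in $\mathcal J(E)$; (iii) $s_1\vee s_2=s_1+s_2$ in $\mathcal J(E)$; (iv) for every $x\in E$ and every $\epsilon>0$ there exist $x_1,x_2\in E$ with $x=x_1+x_2$, $s_1(x)-s_1(x_1)<\epsilon$ and $s_2(x)-s_2(x_2)<\epsilon$. In particular, if $s_1,s_2$ are two distinct extremal states of $E$, then $s_1\wedge s_2=0$.
   Context: Pseudo effect algebra: partial algebra $(E;+,0,1)$ such that for all $a,b,c$: (i) $a+b$ and $(a+b)+c$ exist iff $b+c$ and $a+(b+c)$ exist, and then they are equal; (ii) there is exactly one $d$ and one $e$ with $a+d=e+a=1$; (iii) if $a+b$ exists there are $d,e$ with $a+b=d+a=b+e$; (iv) if $1+a$ or $a+1$ exists then $a=0$. (RDP): whenever $a_1+a_2=b_1+b_2$ there are $d_1,\dots,d_4$ with $d_1+d_2=a_1$, $d_3+d_4=a_2$, $d_1+d_3=b_1$, $d_2+d_4=b_2$. Signed measure: $m:E\to\mathbb R$ additive on defined sums; measure: nonnegative signed measure; state: measure with $s(1)=1$; $\mathcal S(E)$: set of states; extremal state: extreme point of the convex set $\mathcal S(E)$. $\mathcal J(E)$: signed measures that are differences of two measures, ordered by $m_1\le^+m_2$ iff $m_2-m_1$ is a measure; under (RDP) it is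 a lattice-ordered group, and $\wedge,\vee$ refer to this lattice. A face of a convex set $K$ is a convex $F\subseteq K$ such that $\lambda x_1+(1-\lambda)x_2\in F$, $x_1,x_2\in K$, $0<\lambda<1$ imply $x_1,x_2\in F$; the face generated by a point is the smallest face containing it. *)

theory Defs
  imports Complex_Main
begin

text \<open>A pseudo effect algebra on the whole type 'a: partial addition pls
  (None = undefined), constants z (zero) and u (unit).\<close>

definition pea :: "('a \<Rightarrow> 'a \<Rightarrow> 'a option) \<Rightarrow> 'a \<Rightarrow> 'a \<Rightarrow> bool" where
  "pea pls z u \<longleftrightarrow>
     (\<forall>a b c. Option.bind (pls a b) (\<lambda>ab. pls ab c) = Option.bind (pls b c) (\<lambda>bc. pls a bc)) \<and>
     (\<forall>a. (\<exists>!d. pls a d = Some u) \<and> (\<exists>!e. pls e a = Some u)) \<and>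
     (\<forall>a b ab. pls a b = Some ab \<longrightarrow> (\<exists>d e. pls d a = Some ab \<and> pls b e = Some ab)) \<and>
     (\<forall>a. (pls u a \<noteq> None \<or> pls a u \<noteq> None) \<longrightarrow> a = z)"

definition RDP :: "('a \<Rightarrow> 'a \<Rightarrow> 'a option) \<Rightarrow> bool" where
  "RDP pls \<longleftrightarrow>
     (\<forall>a1 a2 b1 b2 c. pls a1 a2 = Some c \<and> pls b1 b2 = Some c \<longrightarrow>
        (\<exists>d1 d2 d3 d4. pls d1 d2 = Some a1 \<and> pls d3 d4 = Some a2 \<and>
                       pls d1 d3 = Some b1 \<and> pls d2 d4 = Some b2))"

definition signed_measure :: "('a \<Rightarrow> 'a \<Rightarrow> 'a option) \<Rightarrow> ('a \<Rightarrow> real) \<Rightarrow> bool" where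
  "signed_measure pls m \<longleftrightarrow> (\<forall>a b c. pls a b = Some c \<longrightarrow> m c = m a + m b)"

definition is_measure :: "('a \<Rightarrow> 'a \<Rightarrow> 'a option) \<Rightarrow> ('a \<Rightarrow> real) \<Rightarrow> bool" where
  "is_measure pls m \<longleftrightarrow> signed_measure pls m \<and> (\<forall>a. 0 \<le> m a)"

definition is_state :: "('a \<Rightarrow> 'a \<Rightarrow> 'a option) \<Rightarrow> 'a \<Rightarrow> ('a \<Rightarrow> real) \<Rightarrow> bool" where
  "is_state pls u s \<longleftrightarrow> is_measure pls s \<and> s u = 1"

definition states :: "('a \<Rightarrow> 'a \<Rightarrow> 'a option) \<Rightarrow> 'a \<Rightarrow> ('a \<Rightarrow> real) set" where
  "states pls u = {s. is_state pls u s}"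

definition comb :: "real \<Rightarrow> ('a \<Rightarrow> real) \<Rightarrow> ('a \<Rightarrow> real) \<Rightarrow> ('a \<Rightarrow> real)" where
  "comb l f g = (\<lambda>x. l * f x + (1 - l) * g x)"

definition convex_fn :: "('a \<Rightarrow> real) set \<Rightarrow> bool" where
  "convex_fn K \<longleftrightarrow> (\<forall>f\<in>K. \<forall>g\<in>K. \<forall>l. 0 \<le> l \<and> l \<le> 1 \<longrightarrow> comb l f g \<in> K)"

definition is_face :: "('a \<Rightarrow> real) set \<Rightarrow> ('a \<Rightarrow> real) set \<Rightarrow> bool" where
  "is_face K F \<longleftrightarrow> F \<subseteq> K \<and> convex_fn F \<and>
     (\<forall>f\<in>K. \<forall>g\<in>K. \<forall>l. 0 < l \<and> l < 1 \<and> comb l f g \<in> F \<longrightarrow> f \<in> F \<and> g \<in> F)"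

definition face_gen :: "('a \<Rightarrow> real) set \<Rightarrow> ('a \<Rightarrow> real) \<Rightarrow> ('a \<Rightarrow> real) set" where
  "face_gen K s = \<Inter>{F. is_face K F \<and> s \<in> F}"

definition extreme_pt :: "('a \<Rightarrow> real) set \<Rightarrow> ('a \<Rightarrow> real) \<Rightarrow> bool" where
  "extreme_pt K s \<longleftrightarrow> s \<in> K \<and>
     (\<forall>f\<in>K. \<forall>g\<in>K. \<forall>l. 0 < l \<and> l < 1 \<and> s = comb l f g \<longrightarrow> f = s \<and> g = s)"

definition Jset :: "('a \<Rightarrow> 'a \<Rightarrow> 'a option) \<Rightarrow> ('a \<Rightarrow> real) set" where
  "Jset pls = {m. \<exists>m1 m2. is_measure pls m1 \<and> is_measure pls m2 \<and> m = (\<lambda>x. m1 x - m2 x)}"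

definition leJ :: "('a \<Rightarrow> 'a \<Rightarrow> 'a option) \<Rightarrow> ('a \<Rightarrow> real) \<Rightarrow> ('a \<Rightarrow> real) \<Rightarrow> bool" where
  "leJ pls m1 m2 \<longleftrightarrow> is_measure pls (\<lambda>x. m2 x - m1 x)"

definition is_meetJ :: "('a \<Rightarrow> 'a \<Rightarrow> 'a option) \<Rightarrow> ('a \<Rightarrow> real) \<Rightarrow> ('a \<Rightarrow> real) \<Rightarrow> ('a \<Rightarrow> real) \<Rightarrow> bool" where
  "is_meetJ pls m a b \<longleftrightarrow> m \<in> Jset pls \<and> leJ pls m a \<and> leJ pls m b \<and>
     (\<forall>k\<in>Jset pls. leJ pls k a \<and> leJ pls k b \<longrightarrow> leJ pls k m)"

definition is_joinJ :: "('a \<Rightarrow> 'a \<Rightarrow> 'a option) \<Rightarrow> ('a \<Rightarrow> real) \<Rightarrow> ('a \<Rightarrow> real) \<Rightarrow> ('a \<Rightarrow> real) \<Rightarrow> bool" where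
  "is_joinJ pls m a b \<longleftrightarrow> m \<in> Jset pls \<and> leJ pls a m \<and> leJ pls b m \<and>
     (\<forall>k\<in>Jset pls. leJ pls a k \<and> leJ pls b k \<longrightarrow> leJ pls m k)"

end

theory Submission
  imports Defs
begin

lemma assocL:
  assumes "pea pls z u" "pls a b = Some ab" "pls ab c = Some r"
  shows "\<exists>bc. pls b c = Some bc \<and> pls a bc = Some r"
proof -
  have "Option.bind (pls a b) (\<lambda>ab. pls ab c) = Option.bind (pls b c) (\<lambda>bc. pls a bc)"
    using assms(1) unfolding pea_def by blast
  with assms(2,3) show ?thesis by (cases "pls b c") auto
qed

lemma assocR:
  assumes "pea pls z u" "pls b c = Some bc" "pls a bc = Some r"
  shows "\<exists>ab. pls a b = Some ab \<and> pls ab c = Some r"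
proof -
  have "Option.bind (pls a b) (\<lambda>ab. pls ab c) = Option.bind (pls b c) (\<lambda>bc. pls a bc)"
    using assms(1) unfolding pea_def by blast
  with assms(2,3) show ?thesis by (cases "pls a b") auto
qed

lemma pea_u:
  assumes "pea pls z u"
  shows "pls u z = Some u" "pls z u = Some u"
proof -
  from assms obtain d where d: "pls u d = Some u" unfolding pea_def by blast
  with assms have "d = z" unfolding pea_def by blast
  with d show "pls u z = Some u" by simp
  from assms obtain e where e: "pls e u = Some u" unfolding pea_def by blast
  with assms have "e = z" unfolding pea_def by blast
  with e show "pls z u = Some u" by simp
qed

lemma pea_zr:
  assumes "pea pls z u"
  shows "pls y z = Some y"
proof -
  from assms obtain e where e: "pls e y = Some u" unfolding pea_def by blast
  from assocL[OF assms e pea_u(1)[OF assms]] obtain w where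
    w: "pls y z = Some w" "pls e w = Some u" by blast
  from assms have "\<exists>!d. pls e d = Some u" unfolding pea_def by blast
  with e w have "w = y" by blast
  with w show ?thesis by simp
qed

lemma pea_zl:
  assumes "pea pls z u"
  shows "pls z y = Some y"
proof -
  from assms obtain d where d: "pls y d = Some u" unfolding pea_def by blast
  from assocR[OF assms d pea_u(2)[OF assms]] obtain w where
    w: "pls z y = Some w" "pls w d = Some u" by blast
  from assms have "\<exists>!e. pls e d = Some u" unfolding pea_def by blast
  with d w have "w = y" by blast
  with w show ?thesis by simp
qed

lemma sm_add: "signed_measure pls m \<Longrightarrow> pls a b = Some c \<Longrightarrow> m c = m a + m b"
  unfolding signed_measure_def by blast

lemma meas_add: "is_measure pls m \<Longrightarrow> pls a b = Some c \<Longrightarrow> m c = m a + m b"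
  unfolding is_measure_def signed_measure_def by blast

lemma meas_nn: "is_measure pls m \<Longrightarrow> 0 \<le> m a"
  unfolding is_measure_def by blast

lemma sm_z: "pea pls z u \<Longrightarrow> signed_measure pls m \<Longrightarrow> m z = 0"
  using sm_add[of pls m u z u] pea_u[of pls z u] by simp

lemma meas_le_u:
  assumes "pea pls z u" "is_measure pls m" shows "m y \<le> m u"
proof -
  from assms obtain d where d: "pls y d = Some u" unfolding pea_def by blast
  show ?thesis using meas_add[OF assms(2) d] meas_nn[OF assms(2), of d] by simp
qed

lemma meas_lin:
  assumes "is_measure pls f" "is_measure pls g" "0 \<le> a" "0 \<le> b"
    "\<And>x. h x = a * f x + b * g x"
  shows "is_measure pls h"
  using assms unfolding is_measure_def signed_measure_def
  by (auto simp: algebra_simps)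

lemma Jset_sm: "k \<in> Jset pls \<Longrightarrow> signed_measure pls k"
  unfolding Jset_def is_measure_def signed_measure_def by auto

lemma swap:
  assumes "pea pls z u" "pls a1 a2 = Some a" "pls b1 b2 = Some b" "pls a b = Some ab"
  shows "\<exists>c1 d q p. pls a1 d = Some c1 \<and> pls c1 q = Some ab \<and> pls a2 b2 = Some q
     \<and> pls a2 b1 = Some p \<and> pls d a2 = Some p"
proof -
  from assocL[OF assms(1,2,4)] obtain v where v: "pls a2 b = Some v" "pls a1 v = Some ab" by blast
  from assocR[OF assms(1,3) v(1)] obtain p where p: "pls a2 b1 = Some p" "pls p b2 = Some v" by blast
  from assms(1) p(1) obtain d where d: "pls d a2 = Some p" unfolding pea_def by blast
  from assocL[OF assms(1) d p(2)] obtain q where q: "pls a2 b2 = Some q" "pls d q = Some v" by blast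
  from assocR[OF assms(1) q(2) v(2)] obtain c1 where "pls a1 d = Some c1" "pls c1 q = Some ab" by blast
  with q p d show ?thesis by blast
qed

definition mt :: "('a \<Rightarrow> 'a \<Rightarrow> 'a option) \<Rightarrow> ('a \<Rightarrow> real) \<Rightarrow> ('a \<Rightarrow> real) \<Rightarrow> 'a \<Rightarrow> real" where
  "mt pls \<mu> \<nu> y = Inf {\<mu> y1 + \<nu> y2 | y1 y2. pls y1 y2 = Some y}"

lemma mt_lower:
  assumes "is_measure pls \<mu>" "is_measure pls \<nu>" "pls y1 y2 = Some y"
  shows "mt pls \<mu> \<nu> y \<le> \<mu> y1 + \<nu> y2"
  unfolding mt_def
proof (rule cInf_lower)
  show "\<mu> y1 + \<nu> y2 \<in> {\<mu> y1 + \<nu> y2 | y1 y2. pls y1 y2 = Some y}" using assms(3) by blast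
  show "bdd_below {\<mu> y1 + \<nu> y2 | y1 y2. pls y1 y2 = Some y}"
    unfolding bdd_below_def using meas_nn[OF assms(1)] meas_nn[OF assms(2)]
    by (smt (verit) mem_Collect_eq)
qed

lemma mt_ge:
  assumes "pea pls z u" "\<And>y1 y2. pls y1 y2 = Some y \<Longrightarrow> c \<le> \<mu> y1 + \<nu> y2"
  shows "c \<le> mt pls \<mu> \<nu> y"
  unfolding mt_def
proof (rule cInf_greatest)
  show "{\<mu> y1 + \<nu> y2 | y1 y2. pls y1 y2 = Some y} \<noteq> {}" using pea_zl[OF assms(1)] by blast
qed (use assms(2) in blast)

lemma mt_nn:
  assumes "pea pls z u" "is_measure pls \<mu>" "is_measure pls \<nu>"
  shows "0 \<le> mt pls \<mu> \<nu> y"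
  by (rule mt_ge[OF assms(1)]) (use meas_nn[OF assms(2)] meas_nn[OF assms(3)] in fastforce)

lemma mt_le1:
  assumes "pea pls z u" "is_measure pls \<mu>" "is_measure pls \<nu>"
  shows "mt pls \<mu> \<nu> y \<le> \<nu> y" "mt pls \<mu> \<nu> y \<le> \<mu> y"
proof -
  have "mt pls \<mu> \<nu> y \<le> \<mu> z + \<nu> y" by (rule mt_lower[OF assms(2,3) pea_zl[OF assms(1)]])
  then show "mt pls \<mu> \<nu> y \<le> \<nu> y" using sm_z[OF assms(1), of \<mu>] assms(2)
    unfolding is_measure_def by simp
  have "mt pls \<mu> \<nu> y \<le> \<mu> y + \<nu> z" by (rule mt_lower[OF assms(2,3) pea_zr[OF assms(1)]])
  then show "mt pls \<mu> \<nu> y \<le> \<mu> y" using sm_z[OF assms(1), of \<nu>] assms(3)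
    unfolding is_measure_def by simp
qed

lemma mt_add:
  assumes pea: "pea pls z u" and rdp: "RDP pls" and m1: "is_measure pls \<mu>" and m2: "is_measure pls \<nu>"
    and ab: "pls a b = Some ab"
  shows "mt pls \<mu> \<nu> ab = mt pls \<mu> \<nu> a + mt pls \<mu> \<nu> b"
proof (rule antisym)
  show "mt pls \<mu> \<nu> a + mt pls \<mu> \<nu> b \<le> mt pls \<mu> \<nu> ab"
  proof (rule mt_ge[OF pea])
    fix c1 c2 assume c: "pls c1 c2 = Some ab"
    from rdp ab c obtain d1 d2 d3 d4 where d: "pls d1 d2 = Some a" "pls d3 d4 = Some b"
      "pls d1 d3 = Some c1" "pls d2 d4 = Some c2" unfolding RDP_def by blast
    have "mt pls \<mu> \<nu> a \<le> \<mu> d1 + \<nu> d2" by (rule mt_lower[OF m1 m2 d(1)])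
    moreover have "mt pls \<mu> \<nu> b \<le> \<mu> d3 + \<nu> d4" by (rule mt_lower[OF m1 m2 d(2)])
    moreover have "\<mu> c1 = \<mu> d1 + \<mu> d3" by (rule meas_add[OF m1 d(3)])
    moreover have "\<nu> c2 = \<nu> d2 + \<nu> d4" by (rule meas_add[OF m2 d(4)])
    ultimately show "mt pls \<mu> \<nu> a + mt pls \<mu> \<nu> b \<le> \<mu> c1 + \<nu> c2" by linarith
  qed
next
  have key: "mt pls \<mu> \<nu> ab \<le> (\<mu> a1 + \<nu> a2) + (\<mu> b1 + \<nu> b2)"
    if a: "pls a1 a2 = Some a" and b: "pls b1 b2 = Some b" for a1 a2 b1 b2
  proof -
    from swap[OF pea a b ab] obtain c1 d q p where s: "pls a1 d = Some c1" "pls c1 q = Some ab"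
      "pls a2 b2 = Some q" "pls a2 b1 = Some p" "pls d a2 = Some p" by blast
    have "mt pls \<mu> \<nu> ab \<le> \<mu> c1 + \<nu> q" by (rule mt_lower[OF m1 m2 s(2)])
    moreover have "\<mu> c1 = \<mu> a1 + \<mu> d" by (rule meas_add[OF m1 s(1)])
    moreover have "\<nu> q = \<nu> a2 + \<nu> b2" by (rule meas_add[OF m2 s(3)])
    moreover have "\<mu> p = \<mu> a2 + \<mu> b1" by (rule meas_add[OF m1 s(4)])
    moreover have "\<mu> p = \<mu> d + \<mu> a2" by (rule meas_add[OF m1 s(5)])
    ultimately show ?thesis by linarith
  qed
  have "mt pls \<mu> \<nu> ab - (\<mu> b1 + \<nu> b2) \<le> mt pls \<mu> \<nu> a"
    if b: "pls b1 b2 = Some b" for b1 b2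
    by (rule mt_ge[OF pea]) (use key[OF _ b] in force)
  then have "mt pls \<mu> \<nu> ab - mt pls \<mu> \<nu> a \<le> mt pls \<mu> \<nu> b"
    by (intro mt_ge[OF pea]) force
  then show "mt pls \<mu> \<nu> ab \<le> mt pls \<mu> \<nu> a + mt pls \<mu> \<nu> b" by linarith
qed

lemma mt_meas:
  assumes "pea pls z u" "RDP pls" "is_measure pls \<mu>" "is_measure pls \<nu>"
  shows "is_measure pls (mt pls \<mu> \<nu>)"
  unfolding is_measure_def signed_measure_def
  using mt_add[OF assms] mt_nn[OF assms(1,3,4)] by blast

lemma mt_glb:
  assumes "pea pls z u" "is_measure pls \<mu>" "is_measure pls \<nu>" "signed_measure pls k"
    "is_measure pls (\<lambda>x. \<mu> x - k x)" "is_measure pls (\<lambda>x. \<nu> x - k x)"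
  shows "k y \<le> mt pls \<mu> \<nu> y"
proof (rule mt_ge[OF assms(1)])
  fix y1 y2 assume "pls y1 y2 = Some y"
  then have "k y = k y1 + k y2" using sm_add[OF assms(4)] by blast
  moreover have "0 \<le> \<mu> y1 - k y1" using meas_nn[OF assms(5)] by blast
  moreover have "0 \<le> \<nu> y2 - k y2" using meas_nn[OF assms(6)] by blast
  ultimately show "k y \<le> \<mu> y1 + \<nu> y2" by linarith
qed

lemma comb_decomp:
  assumes s: "s \<in> states pls u" and t: "t \<in> states pls u" and c: "c > 1"
    and m: "is_measure pls (\<lambda>x. c * s x - t x)"
  shows "\<exists>r\<in>states pls u. s = comb (1/c) t r"
proof -
  define r where "r = (\<lambda>x. (c * s x - t x) / (c - 1))"
  have rm: "is_measure pls r"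
    by (rule meas_lin[OF m m, of "1/(c-1)" 0]) (use c in \<open>auto simp: r_def field_simps\<close>)
  have "r u = 1" using s t c unfolding r_def states_def is_state_def by (simp add: field_simps)
  with rm have "r \<in> states pls u" unfolding states_def is_state_def by simp
  moreover have "s = comb (1/c) t r"
    unfolding comb_def r_def using c by (auto simp: field_simps)
  ultimately show ?thesis by blast
qed

lemma in_face_gen:
  assumes s: "s \<in> states pls u" and t: "t \<in> states pls u" and c: "c > 1"
    and m: "is_measure pls (\<lambda>x. c * s x - t x)"
  shows "t \<in> face_gen (states pls u) s"
  unfolding face_gen_def
proof (rule InterI)
  fix F assume "F \<in> {F. is_face (states pls u) F \<and> s \<in> F}"
  then have F: "is_face (states pls u) F" "s \<in> F" by auto
  from comb_decomp[OF s t c m] obtain r where r: "r \<in> states pls u" "s = comb (1/c) t r" by blast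
  have "0 < 1/c" "1/c < 1" using c by auto
  with F r t show "t \<in> F" unfolding is_face_def by metis
qed

lemma states_comb:
  assumes "f \<in> states pls u" "g \<in> states pls u" "0 \<le> l" "l \<le> 1"
  shows "comb l f g \<in> states pls u"
proof -
  have "is_measure pls (comb l f g)"
    by (rule meas_lin[of pls f g l "1-l"]) (use assms in \<open>auto simp: states_def is_state_def comb_def\<close>)
  then show ?thesis using assms unfolding states_def is_state_def comb_def by simp
qed

lemma T1: fixes l c :: real assumes "0<l" "l<1" shows "c/l * s x - f x = 1/l * (c * s x - comb l f g x) + (1-l)/l * g x"
  using assms by (simp add: comb_def field_simps)
lemma T2: fixes l c :: real assumes "0<l" "l<1" shows "c/(1-l) * s x - g x = 1/(1-l) * (c * s x - comb l f g x) + l/(1-l) * f x"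
proof -
  have g: "c/d * s x - g x = 1/d * (c * s x - (l * f x + d * g x)) + l/d * f x" if "d \<noteq> 0" for d :: real
    using that by (simp add: field_simps)
  have "1 - l \<noteq> 0" using assms by simp
  from g[OF this] show ?thesis by (simp add: comb_def)
qed
lemma T3: fixes l c1 c2 :: real shows "(c1 + c2) * s x - comb l f g x = l * ((c1 + c2) * s x - f x) + (1-l) * ((c1 + c2) * s x - g x)"
  by (simp add: comb_def algebra_simps)

definition Gs :: "('a \<Rightarrow> 'a \<Rightarrow> 'a option) \<Rightarrow> 'a \<Rightarrow> ('a \<Rightarrow> real) \<Rightarrow> ('a \<Rightarrow> real) set" where
  "Gs pls u s = {t \<in> states pls u. \<exists>c>0. is_measure pls (\<lambda>x. c * s x - t x)}"

lemma Gs_face: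
  assumes s: "s \<in> states pls u"
  shows "is_face (states pls u) (Gs pls u s)" "s \<in> Gs pls u s"
proof -
  have sm: "is_measure pls s" using s unfolding states_def is_state_def by simp
  show "s \<in> Gs pls u s" unfolding Gs_def using s
    by (auto intro!: exI[of _ 1] simp: is_measure_def signed_measure_def)
  have conv: "convex_fn (Gs pls u s)" unfolding convex_fn_def
  proof (intro ballI allI impI)
    fix f g and l :: real assume f: "f \<in> Gs pls u s" and g: "g \<in> Gs pls u s" and l: "0 \<le> l \<and> l \<le> 1"
    from f obtain c1 where c1: "c1 > 0" "is_measure pls (\<lambda>x. c1 * s x - f x)" "f \<in> states pls u"
      unfolding Gs_def by blast
    from g obtain c2 where c2: "c2 > 0" "is_measure pls (\<lambda>x. c2 * s x - g x)" "g \<in> states pls u"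
      unfolding Gs_def by blast
    have A: "is_measure pls (\<lambda>x. (c1 + c2) * s x - f x)"
      by (rule meas_lin[OF c1(2) sm, of 1 c2]) (use c2 in \<open>auto simp: algebra_simps\<close>)
    have B: "is_measure pls (\<lambda>x. (c1 + c2) * s x - g x)"
      by (rule meas_lin[OF c2(2) sm, of 1 c1]) (use c1 in \<open>auto simp: algebra_simps\<close>)
    have "is_measure pls (\<lambda>x. (c1 + c2) * s x - comb l f g x)"
      by (rule meas_lin[OF A B, of l "1-l"]) (use l T3 in auto)
    moreover have "comb l f g \<in> states pls u" using states_comb[OF c1(3) c2(3)] l by simp
    ultimately show "comb l f g \<in> Gs pls u s" unfolding Gs_def using c1 c2
      by (auto intro!: exI[of _ "c1+c2"])
  qed
  have ext: "f \<in> Gs pls u s \<and> g \<in> Gs pls u s"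
    if f: "f \<in> states pls u" and g: "g \<in> states pls u" and l: "0 < l" "l < 1"
      and h: "comb l f g \<in> Gs pls u s" for f g and l :: real
  proof -
    from h obtain c where c: "c > 0" "is_measure pls (\<lambda>x. c * s x - comb l f g x)"
      unfolding Gs_def by blast
    have fm: "is_measure pls f" "is_measure pls g" using f g unfolding states_def is_state_def by auto
    have "is_measure pls (\<lambda>x. (c/l) * s x - f x)"
      by (rule meas_lin[OF c(2) fm(2), of "1/l" "(1-l)/l"]) (use l T1[OF l] in auto)
    moreover have "is_measure pls (\<lambda>x. (c/(1-l)) * s x - g x)"
      by (rule meas_lin[OF c(2) fm(1), of "1/(1-l)" "l/(1-l)"]) (use l T2[OF l] in auto)
    moreover have "c/l > 0" "c/(1-l) > 0" using c l by auto
    ultimately show ?thesis unfolding Gs_def using f g by blast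
  qed
  have sub: "Gs pls u s \<subseteq> states pls u" unfolding Gs_def by blast
  show "is_face (states pls u) (Gs pls u s)" unfolding is_face_def
    using conv ext sub by blast
qed

lemma face_gen_sub:
  assumes "s \<in> states pls u" shows "face_gen (states pls u) s \<subseteq> Gs pls u s"
  unfolding face_gen_def using Gs_face[OF assms] by blast

lemma meas_diff:
  assumes "is_measure pls f" "is_measure pls g" "\<And>x. g x \<le> f x"
  shows "is_measure pls (\<lambda>x. f x - g x)"
  using assms unfolding is_measure_def signed_measure_def by (auto simp: algebra_simps)

lemma sm_lin:
  assumes "signed_measure pls f" "signed_measure pls g" "\<And>x. h x = a * f x + b * g x"
  shows "signed_measure pls h"
  using assms unfolding signed_measure_def by (auto simp: algebra_simps)

lemma zero_meas: "is_measure pls (\<lambda>x. 0)"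
  unfolding is_measure_def signed_measure_def by simp

lemma Jset_I: "is_measure pls f \<Longrightarrow> is_measure pls g \<Longrightarrow> h = (\<lambda>x. f x - g x) \<Longrightarrow> h \<in> Jset pls"
  unfolding Jset_def by blast

lemma sm_to_meas: "signed_measure pls f \<Longrightarrow> (\<And>x. 0 \<le> f x) \<Longrightarrow> is_measure pls f"
  unfolding is_measure_def by blast

theorem proposition4p2:
  fixes pls :: "'a \<Rightarrow> 'a \<Rightarrow> 'a option" and z u :: 'a
    and s1 s2 :: "'a \<Rightarrow> real"
  assumes "pea pls z u" and "RDP pls"
    and "s1 \<in> states pls u" and "s2 \<in> states pls u"
  shows "(face_gen (states pls u) s1 \<inter> face_gen (states pls u) s2 = {}
            \<longleftrightarrow> is_meetJ pls (\<lambda>x. 0) s1 s2)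
       \<and> (is_meetJ pls (\<lambda>x. 0) s1 s2 \<longleftrightarrow> is_joinJ pls (\<lambda>x. s1 x + s2 x) s1 s2)
       \<and> (is_joinJ pls (\<lambda>x. s1 x + s2 x) s1 s2 \<longleftrightarrow>
            (\<forall>x. \<forall>\<epsilon>>0. \<exists>x1 x2. pls x1 x2 = Some x \<and> s1 x - s1 x1 < \<epsilon> \<and> s2 x - s2 x2 < \<epsilon>))
       \<and> (extreme_pt (states pls u) s1 \<and> extreme_pt (states pls u) s2 \<and> s1 \<noteq> s2
            \<longrightarrow> is_meetJ pls (\<lambda>x. 0) s1 s2)"
proof -
  note pea = assms(1) and rdp = assms(2) and st1 = assms(3) and st2 = assms(4)
  have sm1: "is_measure pls s1" and u1: "s1 u = 1" using st1 unfolding states_def is_state_def by auto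
  have sm2: "is_measure pls s2" and u2: "s2 u = 1" using st2 unfolding states_def is_state_def by auto
  have ss1: "signed_measure pls s1" "signed_measure pls s2" using sm1 sm2 unfolding is_measure_def by auto
  define m where "m = mt pls s2 s1"
  have mm: "is_measure pls m" unfolding m_def by (rule mt_meas[OF pea rdp sm2 sm1])
  have msm: "signed_measure pls m" using mm unfolding is_measure_def by auto
  have mnn: "\<And>y. 0 \<le> m y" using meas_nn[OF mm] .
  have mle1: "\<And>y. m y \<le> s1 y" unfolding m_def by (rule mt_le1(1)[OF pea sm2 sm1])
  have mle2: "\<And>y. m y \<le> s2 y" unfolding m_def by (rule mt_le1(2)[OF pea sm2 sm1])
  have d1: "is_measure pls (\<lambda>x. s1 x - m x)" by (rule meas_diff[OF sm1 mm mle1])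
  have d2: "is_measure pls (\<lambda>x. s2 x - m x)" by (rule meas_diff[OF sm2 mm mle2])
  have glb: "k y \<le> m y" if "signed_measure pls k" "is_measure pls (\<lambda>x. s1 x - k x)"
      "is_measure pls (\<lambda>x. s2 x - k x)" for k y
    unfolding m_def by (rule mt_glb[OF pea sm2 sm1 that(1,3,2)])
  define Z where "Z \<longleftrightarrow> (\<forall>y. m y = 0)"
  have mJ: "m \<in> Jset pls" by (rule Jset_I[OF mm zero_meas]) simp
  have s12: "is_measure pls (\<lambda>x. s1 x + s2 x)" by (rule meas_lin[OF sm1 sm2, of 1 1]) auto

  have C1: "is_meetJ pls (\<lambda>x. 0) s1 s2 \<longleftrightarrow> Z"
  proof
    assume M: "is_meetJ pls (\<lambda>x. 0) s1 s2"
    then have "leJ pls m (\<lambda>x. 0)" using mJ d1 d2 unfolding is_meetJ_def leJ_def by blast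
    then have "\<And>y. 0 \<le> 0 - m y" unfolding leJ_def using meas_nn[of pls "\<lambda>x. 0 - m x"] by simp
    then show Z unfolding Z_def using mnn by (meson antisym diff_ge_0_iff_ge)
  next
    assume Z
    have "is_measure pls (\<lambda>x. 0 - k x)"
      if k: "k \<in> Jset pls" "is_measure pls (\<lambda>x. s1 x - k x)" "is_measure pls (\<lambda>x. s2 x - k x)" for k
    proof (rule sm_to_meas)
      have ks: "signed_measure pls k" using Jset_sm[OF k(1)] .
      show "signed_measure pls (\<lambda>x. 0 - k x)" by (rule sm_lin[OF ks ks, of _ "-1" 0]) auto
      fix x show "0 \<le> 0 - k x" using glb[OF ks k(2,3), of x] \<open>Z\<close> unfolding Z_def by simp
    qed
    moreover have "(\<lambda>x. 0::real) \<in> Jset pls" by (rule Jset_I[OF zero_meas zero_meas]) simp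
    ultimately show "is_meetJ pls (\<lambda>x. 0) s1 s2" unfolding is_meetJ_def leJ_def
      using sm1 sm2 by simp
  qed

  have C2: "is_joinJ pls (\<lambda>x. s1 x + s2 x) s1 s2 \<longleftrightarrow> Z"
  proof
    assume J: "is_joinJ pls (\<lambda>x. s1 x + s2 x) s1 s2"
    define m' where "m' = (\<lambda>x. s1 x + s2 x - m x)"
    have "m' \<in> Jset pls" by (rule Jset_I[OF s12 mm]) (simp add: m'_def)
    moreover have "leJ pls s1 m'" unfolding leJ_def m'_def using d2 by simp
    moreover have "leJ pls s2 m'" unfolding leJ_def m'_def using d1 by (simp add: algebra_simps)
    ultimately have "leJ pls (\<lambda>x. s1 x + s2 x) m'" using J unfolding is_joinJ_def by blast
    then have "\<And>y. 0 \<le> m' y - (s1 y + s2 y)" unfolding leJ_def using meas_nn[of pls "\<lambda>x. m' x - (s1 x + s2 x)"] by simp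
    then show Z unfolding Z_def m'_def using mnn by (smt (verit))
  next
    assume Z
    have "is_measure pls (\<lambda>x. k x - (s1 x + s2 x))"
      if k: "k \<in> Jset pls" "is_measure pls (\<lambda>x. k x - s1 x)" "is_measure pls (\<lambda>x. k x - s2 x)" for k
    proof (rule sm_to_meas)
      have ks: "signed_measure pls k" using Jset_sm[OF k(1)] .
      define k' where "k' = (\<lambda>x. s1 x + s2 x - k x)"
      have k's: "signed_measure pls k'"
      proof -
        have a: "signed_measure pls (\<lambda>x. s1 x + s2 x)" using s12 unfolding is_measure_def by blast
        show ?thesis by (rule sm_lin[OF a ks, of _ 1 "-1"]) (simp add: k'_def)
      qed
      have "is_measure pls (\<lambda>x. s1 x - k' x)"
        by (rule meas_lin[OF k(3) k(3), of 1 0]) (auto simp: k'_def)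
      moreover have "is_measure pls (\<lambda>x. s2 x - k' x)"
        by (rule meas_lin[OF k(2) k(2), of 1 0]) (auto simp: k'_def)
      ultimately have "\<And>y. k' y \<le> m y" using glb[OF k's] by blast
      then have "\<And>y. k' y \<le> 0" using \<open>Z\<close> unfolding Z_def by simp
      then show "\<And>y. 0 \<le> k y - (s1 y + s2 y)" unfolding k'_def by (smt (verit))
      show "signed_measure pls (\<lambda>x. k x - (s1 x + s2 x))"
        using k's unfolding k'_def signed_measure_def by (auto simp: algebra_simps)
    qed
    moreover have "(\<lambda>x. s1 x + s2 x) \<in> Jset pls" by (rule Jset_I[OF s12 zero_meas]) simp
    moreover have "is_measure pls (\<lambda>x. s1 x + s2 x - s1 x)" using sm2 by simp
    moreover have "is_measure pls (\<lambda>x. s1 x + s2 x - s2 x)" using sm1 by simp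
    ultimately show "is_joinJ pls (\<lambda>x. s1 x + s2 x) s1 s2" unfolding is_joinJ_def leJ_def
      by blast
  qed

  have C3: "(\<forall>x. \<forall>\<epsilon>>0. \<exists>x1 x2. pls x1 x2 = Some x \<and> s1 x - s1 x1 < \<epsilon> \<and> s2 x - s2 x2 < \<epsilon>) \<longleftrightarrow> Z"
  proof
    assume D: "\<forall>x. \<forall>\<epsilon>>0. \<exists>x1 x2. pls x1 x2 = Some x \<and> s1 x - s1 x1 < \<epsilon> \<and> s2 x - s2 x2 < \<epsilon>"
    have "m y \<le> 0" for y
    proof (rule ccontr)
      assume "\<not> m y \<le> 0"
      then have "m y / 2 > 0" by simp
      have "\<forall>\<epsilon>>0. \<exists>x1 x2. pls x1 x2 = Some y \<and> s1 y - s1 x1 < \<epsilon> \<and> s2 y - s2 x2 < \<epsilon>"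
        using D by (rule spec)
      from this[rule_format, OF \<open>m y / 2 > 0\<close>] obtain x1 x2 where x: "pls x1 x2 = Some y" "s1 y - s1 x1 < m y / 2" "s2 y - s2 x2 < m y / 2"
        by blast
      have "m y \<le> s2 x1 + s1 x2" unfolding m_def by (rule mt_lower[OF sm2 sm1 x(1)])
      moreover have "s1 y = s1 x1 + s1 x2" by (rule meas_add[OF sm1 x(1)])
      moreover have "s2 y = s2 x1 + s2 x2" by (rule meas_add[OF sm2 x(1)])
      ultimately show False using x by linarith
    qed
    then show Z unfolding Z_def using mnn by (simp add: order_antisym)
  next
    assume Z
    show "\<forall>x. \<forall>\<epsilon>>0. \<exists>x1 x2. pls x1 x2 = Some x \<and> s1 x - s1 x1 < \<epsilon> \<and> s2 x - s2 x2 < \<epsilon>"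
    proof (intro allI impI)
      fix x and \<epsilon> :: real assume e: "\<epsilon> > 0"
      have lt: "Inf {s2 y1 + s1 y2 | y1 y2. pls y1 y2 = Some x} < \<epsilon>"
        using \<open>Z\<close> e unfolding Z_def m_def mt_def by simp
      have ne: "{s2 y1 + s1 y2 | y1 y2. pls y1 y2 = Some x} \<noteq> {}" using pea_zl[OF pea] by blast
      obtain w where w: "w \<in> {s2 y1 + s1 y2 | y1 y2. pls y1 y2 = Some x}" "w < \<epsilon>"
        using cInf_lessD[OF ne lt] by blast
      then obtain y1 y2 where y: "pls y1 y2 = Some x" "s2 y1 + s1 y2 < \<epsilon>"
        by blast
      have F1: "s1 x = s1 y1 + s1 y2" by (rule meas_add[OF sm1 y(1)])
      have F2: "s2 x = s2 y1 + s2 y2" by (rule meas_add[OF sm2 y(1)])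
      have F3: "0 \<le> s2 y1" "0 \<le> s1 y2" using meas_nn[OF sm1] meas_nn[OF sm2] by auto
      show "\<exists>x1 x2. pls x1 x2 = Some x \<and> s1 x - s1 x1 < \<epsilon> \<and> s2 x - s2 x2 < \<epsilon>"
      proof (intro exI conjI)
        show "pls y1 y2 = Some x" by (rule y(1))
        show "s1 x - s1 y1 < \<epsilon>" using F1 F2 F3 y by linarith
        show "s2 x - s2 y2 < \<epsilon>" using F1 F2 F3 y by linarith
      qed
    qed
  qed

  have pos: "\<exists>t c. t \<in> states pls u \<and> c > 1 \<and> is_measure pls (\<lambda>x. c * s1 x - t x)
      \<and> is_measure pls (\<lambda>x. c * s2 x - t x)" if nZ: "\<not> Z"
  proof -
    from nZ obtain y where "m y \<noteq> 0" unfolding Z_def by blast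
    then have "m y > 0" using mnn[of y] by simp
    moreover have "m y \<le> m u" by (rule meas_le_u[OF pea mm])
    ultimately have mu: "m u > 0" by simp
    define t where "t = (\<lambda>x. m x / m u)"
    define c where "c = 1 / m u + 1"
    have "is_measure pls t" by (rule meas_lin[OF mm mm, of "1/m u" 0]) (use mu in \<open>auto simp: t_def\<close>)
    moreover have "t u = 1" using mu by (simp add: t_def)
    ultimately have ts: "t \<in> states pls u" unfolding states_def is_state_def by simp
    have "is_measure pls (\<lambda>x. c * s1 x - t x)"
      by (rule meas_lin[OF d1 sm1, of "1/m u" 1]) (use mu in \<open>auto simp: t_def c_def field_simps\<close>)
    moreover have "is_measure pls (\<lambda>x. c * s2 x - t x)"
      by (rule meas_lin[OF d2 sm2, of "1/m u" 1]) (use mu in \<open>auto simp: t_def c_def field_simps\<close>)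
    moreover have "c > 1" using mu by (simp add: c_def)
    ultimately show ?thesis using ts by blast
  qed

  have C4: "face_gen (states pls u) s1 \<inter> face_gen (states pls u) s2 = {} \<longleftrightarrow> Z"
  proof
    assume dis: "face_gen (states pls u) s1 \<inter> face_gen (states pls u) s2 = {}"
    show Z
    proof (rule ccontr)
      assume "\<not> Z"
      from pos[OF this] obtain t c where tc: "t \<in> states pls u" "c > 1"
        "is_measure pls (\<lambda>x. c * s1 x - t x)" "is_measure pls (\<lambda>x. c * s2 x - t x)" by blast
      have "t \<in> face_gen (states pls u) s1" by (rule in_face_gen[OF st1 tc(1,2,3)])
      moreover have "t \<in> face_gen (states pls u) s2" by (rule in_face_gen[OF st2 tc(1,2,4)])
      ultimately show False using dis by blast
    qed
  next
    assume Z
    show "face_gen (states pls u) s1 \<inter> face_gen (states pls u) s2 = {}"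
    proof (rule ccontr)
      assume "face_gen (states pls u) s1 \<inter> face_gen (states pls u) s2 \<noteq> {}"
      then obtain t where "t \<in> Gs pls u s1" "t \<in> Gs pls u s2"
        using face_gen_sub[OF st1] face_gen_sub[OF st2] by blast
      then obtain c1 c2 where c: "c1 > 0" "is_measure pls (\<lambda>x. c1 * s1 x - t x)"
        "c2 > 0" "is_measure pls (\<lambda>x. c2 * s2 x - t x)" and ts: "t \<in> states pls u"
        unfolding Gs_def by blast
      have tm: "is_measure pls t" "t u = 1" using ts unfolding states_def is_state_def by auto
      define d where "d = c1 + c2"
      have dp: "d > 0" "d - c1 \<ge> 0" "d - c2 \<ge> 0" using c by (auto simp: d_def)
      define k where "k = (\<lambda>x. t x / d)"
      have ks: "signed_measure pls k"
        by (rule sm_lin[of pls t t _ "1/d" 0]) (use tm in \<open>auto simp: k_def is_measure_def\<close>)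
      have "is_measure pls (\<lambda>x. s1 x - k x)"
        by (rule meas_lin[OF c(2) sm1, of "1/d" "(d-c1)/d"]) (use dp in \<open>auto simp: k_def field_simps\<close>)
      moreover have "is_measure pls (\<lambda>x. s2 x - k x)"
        by (rule meas_lin[OF c(4) sm2, of "1/d" "(d-c2)/d"]) (use dp in \<open>auto simp: k_def field_simps\<close>)
      ultimately have "k u \<le> m u" using glb[OF ks] by blast
      moreover have "k u > 0" using dp tm by (simp add: k_def)
      ultimately show False using \<open>Z\<close> unfolding Z_def by simp
    qed
  qed

  have C5: "extreme_pt (states pls u) s1 \<and> extreme_pt (states pls u) s2 \<and> s1 \<noteq> s2 \<longrightarrow> Z"
  proof (intro impI, elim conjE, rule ccontr)
    assume e1: "extreme_pt (states pls u) s1" and e2: "extreme_pt (states pls u) s2"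
      and ne: "s1 \<noteq> s2" and "\<not> Z"
    from pos[OF this(4)] obtain t c where tc: "t \<in> states pls u" "c > 1"
      "is_measure pls (\<lambda>x. c * s1 x - t x)" "is_measure pls (\<lambda>x. c * s2 x - t x)" by blast
    have l: "0 < 1/c" "1/c < 1" using tc(2) by auto
    from comb_decomp[OF st1 tc(1,2,3)] obtain r1 where r1: "r1 \<in> states pls u" "s1 = comb (1/c) t r1" by blast
    from comb_decomp[OF st2 tc(1,2,4)] obtain r2 where r2: "r2 \<in> states pls u" "s2 = comb (1/c) t r2" by blast
    have "t = s1" using e1 r1 tc(1) l unfolding extreme_pt_def by blast
    moreover have "t = s2" using e2 r2 tc(1) l unfolding extreme_pt_def by blast
    ultimately show False using ne by simp
  qed

  show ?thesis using C1 C2 C3 C4 C5 by blast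
qed

end
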